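(* Let $r\ge 0$ and $n\ge 3r+1$ be integers, and let $F$ be a set of $r$ pairwise disjoint (independent) edges of the complete graph $K_n$. Then $m(K_n\setminus F)=r+2$, where $K_n\setminus F$ is the graph obtained from $K_n$ by deleting the edges in $F$.
   Context: All graphs are finite, simple and undirected. A list assignment $L$ for a graph $G$ assigns to each vertex $v$ a set $L(v)$ of colors; an $L$-coloring is a proper vertex coloring $c$ of $G$ with $c(v)\in L(v)$ for every vertex $v$. A $k$-list assignment is a list assignment with $|L(v)|=k$ for all $v$. $G$ is uniquely $k$-list colorable (U$k$LC) if there exists a $k$-list assignment $L$ such that $G$ has exactly one $L$-coloring. $G$ has property $M(k)$ if it is not U$k$LC, i.e. for every $k$-list assignment $L$, $G$ has either no $L$-coloring or at least two $L$-colorings. The m-number $m(G)$ is the least integer $k\ge 1$ such that $G$ has property $M(k)$. (Every U$k$LC graph is also U$(k-1)$LC, so $G$ is U$k$LC iff $k<m(G)$.) *)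

theory Defs
  imports Main "HOL-Library.FuncSet"
begin

definition is_L_coloring :: "'a set \<Rightarrow> ('a \<Rightarrow> 'a \<Rightarrow> bool) \<Rightarrow> ('a \<Rightarrow> nat set) \<Rightarrow> ('a \<Rightarrow> nat) \<Rightarrow> bool" where
  "is_L_coloring V E L c \<longleftrightarrow>
     c \<in> extensional V \<and> (\<forall>v\<in>V. c v \<in> L v) \<and> (\<forall>u\<in>V. \<forall>v\<in>V. E u v \<longrightarrow> c u \<noteq> c v)"

definition k_list_assignment :: "'a set \<Rightarrow> nat \<Rightarrow> ('a \<Rightarrow> nat set) \<Rightarrow> bool" where
  "k_list_assignment V k L \<longleftrightarrow> (\<forall>v\<in>V. finite (L v) \<and> card (L v) = k)"

definition uniquely_k_list_colorable :: "'a set \<Rightarrow> ('a \<Rightarrow> 'a \<Rightarrow> bool) \<Rightarrow> nat \<Rightarrow> bool" where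
  "uniquely_k_list_colorable V E k \<longleftrightarrow>
     (\<exists>L. k_list_assignment V k L \<and> (\<exists>!c. is_L_coloring V E L c))"

definition has_property_M :: "'a set \<Rightarrow> ('a \<Rightarrow> 'a \<Rightarrow> bool) \<Rightarrow> nat \<Rightarrow> bool" where
  "has_property_M V E k \<longleftrightarrow> \<not> uniquely_k_list_colorable V E k"

definition m_number :: "'a set \<Rightarrow> ('a \<Rightarrow> 'a \<Rightarrow> bool) \<Rightarrow> nat" where
  "m_number V E = (LEAST k. k \<ge> 1 \<and> has_property_M V E k)"

definition Kn_minus :: "nat \<Rightarrow> nat set set \<Rightarrow> nat \<Rightarrow> nat \<Rightarrow> bool" where
  "Kn_minus n F u v \<longleftrightarrow> u < n \<and> v < n \<and> u \<noteq> v \<and> {u, v} \<notin> F"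

end

theory Submission
  imports Defs
begin


lemma upper:
  fixes r n :: nat and F :: "nat set set"
  assumes nle: "2 * r < n"
    and H2: "\<forall>e\<in>F. \<exists>u v. u < n \<and> v < n \<and> u \<noteq> v \<and> e = {u, v}"
    and cF: "card F = r" and fF: "finite F"
  shows "has_property_M {..<n} (Kn_minus n F) (r+2)"
proof -
  define V where "V = {..<n}"
  define E where "E = Kn_minus n F"
  have "\<not> (\<exists>L. k_list_assignment V (r+2) L \<and> (\<exists>!c. is_L_coloring V E L c))"
  proof
    assume "\<exists>L. k_list_assignment V (r+2) L \<and> (\<exists>!c. is_L_coloring V E L c)"
    then obtain L c where kL: "k_list_assignment V (r+2) L" and col: "is_L_coloring V E L c"
      and uniq: "\<And>c'. is_L_coloring V E L c' \<Longrightarrow> c' = c" by metis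
    have cext: "c \<in> extensional V" and cL: "\<And>v. v \<in> V \<Longrightarrow> c v \<in> L v"
      and cp: "\<And>u v. u \<in> V \<Longrightarrow> v \<in> V \<Longrightarrow> E u v \<Longrightarrow> c u \<noteq> c v"
      using col unfolding is_L_coloring_def by auto
    have nonadj: "\<And>u v. u \<in> V \<Longrightarrow> v \<in> V \<Longrightarrow> u \<noteq> v \<Longrightarrow> c u = c v \<Longrightarrow> {u,v} \<in> F"
      using cp unfolding E_def Kn_minus_def V_def by fastforce
    show False
    proof (cases "\<exists>v\<in>V. \<exists>y\<in>L v. y \<notin> c ` V")
      case True
      then obtain v y where v: "v \<in> V" "y \<in> L v" "y \<notin> c ` V" by blast
      define c' where "c' = c(v := y)"
      have "is_L_coloring V E L c'"
        unfolding is_L_coloring_def c'_def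
      proof (intro conjI ballI impI)
        show "c(v := y) \<in> extensional V" using cext v(1) by (auto simp: extensional_def)
        fix u assume "u \<in> V" then show "(c(v := y)) u \<in> L u" using v cL by auto
      next
        fix u w assume "u \<in> V" "w \<in> V" "E u w"
        then show "(c(v := y)) u \<noteq> (c(v := y)) w" using v cp[of u w]
          by (auto simp: E_def Kn_minus_def)
      qed
      then have "c' = c" by (rule uniq)
      then have "c v = y" unfolding c'_def by (metis fun_upd_same)
      then show False using v by blast
    next
      case False
      then have Lsub: "\<And>v. v \<in> V \<Longrightarrow> L v \<subseteq> c ` V" by blast
      define T where "T = {v\<in>V. \<forall>w\<in>V. c w = c v \<longrightarrow> w = v}"
      have TV: "T \<subseteq> V" unfolding T_def by auto
      have fT: "finite T" using TV unfolding V_def by (meson finite_lessThan finite_subset)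
      have Tuniq: "\<And>a w. a \<in> T \<Longrightarrow> w \<in> V \<Longrightarrow> c w = c a \<Longrightarrow> w = a" unfolding T_def by auto
      have VT: "c ` (V - T) \<subseteq> (\<lambda>e. c (Min e)) ` F"
      proof
        fix b assume "b \<in> c ` (V - T)"
        then obtain w where w: "w \<in> V" "w \<notin> T" "b = c w" by auto
        then obtain w' where w': "w' \<in> V" "w' \<noteq> w" "c w' = c w" unfolding T_def by auto
        then have e: "{w, w'} \<in> F" using nonadj w by metis
        have "Min {w, w'} \<in> {w, w'}" by (rule Min_in) auto
        then have "c (Min {w,w'}) = b" using w w' by auto
        then show "b \<in> (\<lambda>e. c (Min e)) ` F" using e by (metis image_eqI)
      qed
      have cVT: "card (c ` (V - T)) \<le> r"
        using card_mono[OF _ VT] card_image_le[OF fF, of "\<lambda>e. c (Min e)"] fF cF by auto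
      have Tne: "T \<noteq> {}"
      proof
        assume "T = {}"
        have "V \<subseteq> \<Union>F"
        proof
          fix w assume w: "w \<in> V"
          then have "w \<notin> T" using \<open>T = {}\<close> by auto
          then obtain w' where w': "w' \<in> V" "w' \<noteq> w" "c w' = c w" using w unfolding T_def by auto
          then have "{w, w'} \<in> F" using nonadj w by metis
          then show "w \<in> \<Union>F" by blast
        qed
        have "card (\<Union>F) \<le> sum card F" by (rule card_Union_le_sum_card)
        also have "sum card F = sum (\<lambda>e. 2) F"
          by (rule sum.cong) (use H2 in auto)
        also have "\<dots> = 2 * r" using cF by simp
        finally have "card (\<Union>F) \<le> 2 * r" .
        moreover have "finite (\<Union>F)" using fF H2 by auto
        ultimately have "card V \<le> 2 * r" using card_mono[OF _ \<open>V \<subseteq> \<Union>F\<close>] by linarith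
        then show False using nle unfolding V_def by simp
      qed
      have step: "\<forall>v\<in>T. \<exists>w. w \<in> T \<and> w \<noteq> v \<and> c w \<in> L v"
      proof
        fix v assume vT: "v \<in> T"
        then have vV: "v \<in> V" using TV by auto
        have fL: "finite (L v)" "card (L v) = r + 2" using kL vV unfolding k_list_assignment_def by auto
        have "card (L v - {c v}) = r + 1" using fL cL[OF vV] by simp
        then have "\<not> (L v - {c v} \<subseteq> c ` (V - T))"
          using cVT card_mono[of "c ` (V - T)" "L v - {c v}"] fT
          by (metis Suc_eq_plus1 V_def finite_Diff finite_imageI finite_lessThan not_less_eq_eq)
        then obtain b where b: "b \<in> L v" "b \<noteq> c v" "b \<notin> c ` (V - T)" by blast
        then obtain w where w: "w \<in> V" "c w = b" using Lsub[OF vV] by auto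
        then have "w \<in> T" using b by auto
        then show "\<exists>w. w \<in> T \<and> w \<noteq> v \<and> c w \<in> L v" using w b by auto
      qed
      then obtain f where f: "\<And>v. v \<in> T \<Longrightarrow> f v \<in> T \<and> f v \<noteq> v \<and> c (f v) \<in> L v"
        by metis
      obtain v0 where v0: "v0 \<in> T" using Tne by auto
      define g where "g q = (f ^^ q) v0" for q
      have gT: "g q \<in> T" for q unfolding g_def by (induction q) (auto simp: v0 f)
      have "\<not> inj_on g {..card T}"
      proof
        assume "inj_on g {..card T}"
        then have "card {..card T} \<le> card T"
          using card_inj_on_le[of g "{..card T}" T] gT fT by auto
        then show False by simp
      qed
      then obtain i j where ij: "i < j" "g i = g j"
        unfolding inj_on_def by (metis atMost_iff linorder_neqE_nat)
      define x where "x = g i"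
      define p where "p = j - i"
      have p: "p \<ge> 1" "(f ^^ p) x = x"
      proof -
        show "p \<ge> 1" using ij unfolding p_def by simp
        have "(f ^^ p) x = (f ^^ (p + i)) v0" unfolding x_def g_def by (simp add: funpow_add)
        also have "p + i = j" using ij unfolding p_def by simp
        finally show "(f ^^ p) x = x" using ij unfolding x_def g_def by simp
      qed
      define C where "C = range (\<lambda>q. (f ^^ q) x)"
      have xT: "x \<in> T" unfolding x_def by (rule gT)
      have CT: "C \<subseteq> T"
      proof
        fix u assume "u \<in> C"
        then obtain q where "u = (f ^^ q) x" unfolding C_def by auto
        moreover have "(f ^^ q) x \<in> T" by (induction q) (auto simp: xT f)
        ultimately show "u \<in> T" by simp
      qed
      have fC: "finite C" using CT fT finite_subset by auto
      have xC: "x \<in> C" unfolding C_def by (metis funpow_0 rangeI)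
      have "C \<subseteq> f ` C"
      proof
        fix u assume "u \<in> C"
        then obtain q where q: "u = (f ^^ q) x" unfolding C_def by auto
        show "u \<in> f ` C"
        proof (cases q)
          case 0
          obtain p' where "p = Suc p'" using p by (cases p) auto
          then have "x = f ((f ^^ p') x)" using p by (metis comp_apply funpow_Suc_right funpow_simps_right(2) funpow_swap1)
          then show ?thesis using q 0 unfolding C_def by auto
        next
          case (Suc q')
          then have "u = f ((f ^^ q') x)" using q by simp
          then show ?thesis unfolding C_def by auto
        qed
      qed
      then have injC: "inj_on f C" using fC finite_surj_inj by blast
      have fCC: "\<And>u. u \<in> C \<Longrightarrow> f u \<in> C"
        unfolding C_def by (auto, metis funpow.simps(2) o_apply rangeI)
      define c' where "c' u = (if u \<in> C then c (f u) else c u)" for u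
      have "is_L_coloring V E L c'"
        unfolding is_L_coloring_def
      proof (intro conjI ballI impI)
        show "c' \<in> extensional V" using cext CT TV by (auto simp: extensional_def c'_def)
        fix u assume "u \<in> V" then show "c' u \<in> L u" using cL f CT by (auto simp: c'_def)
      next
        fix u w assume uw: "u \<in> V" "w \<in> V" "E u w"
        have une: "u \<noteq> w" using uw(3) unfolding E_def Kn_minus_def by auto
        show "c' u \<noteq> c' w"
        proof (cases "u \<in> C")
          case uC: True
          show ?thesis
          proof (cases "w \<in> C")
            case True
            show ?thesis
            proof
              assume "c' u = c' w"
              then have "c (f u) = c (f w)" using uC True by (simp add: c'_def)
              then have "f u = f w" using Tuniq[of "f w" "f u"] f CT True uC TV by blast
              then show False using injC uC True une unfolding inj_on_def by blast
            qed
          next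
            case False
            show ?thesis
            proof
              assume "c' u = c' w"
              then have "c w = c (f u)" using uC False by (simp add: c'_def)
              then have "w = f u" using Tuniq[of "f u" w] f CT uC uw by blast
              then show False using False fCC uC by auto
            qed
          qed
        next
          case uC: False
          show ?thesis
          proof (cases "w \<in> C")
            case True
            show ?thesis
            proof
              assume "c' u = c' w"
              then have "c u = c (f w)" using uC True by (simp add: c'_def)
              then have "u = f w" using Tuniq[of "f w" u] f CT True uw by blast
              then show False using uC fCC True by auto
            qed
          next
            case False
            then show ?thesis using uC cp uw by (simp add: c'_def)
          qed
        qed
      qed
      then have "c' = c" by (rule uniq)
      then have "c' x = c x" by simp
      then have "c (f x) = c x" using xC by (simp add: c'_def)
      then show False using Tuniq[of x "f x"] f xT TV by blast
    qed
  qed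
  then show ?thesis unfolding has_property_M_def uniquely_k_list_colorable_def V_def E_def by simp
qed



lemma lower:
  fixes r n k :: nat and F :: "nat set set"
  assumes nle: "n \<ge> 3 * r + 1"
    and H2: "\<forall>e\<in>F. \<exists>u v. u < n \<and> v < n \<and> u \<noteq> v \<and> e = {u, v}"
    and cF: "card F = r" and fF: "finite F"
    and H5: "\<forall>e\<in>F. \<forall>e'\<in>F. e \<noteq> e' \<longrightarrow> e \<inter> e' = {}"
    and k1: "1 \<le> k" and kr: "k \<le> r + 1"
  shows "uniquely_k_list_colorable {..<n} (Kn_minus n F) k"
proof -
  define V where "V = {..<n}"
  define E where "E = Kn_minus n F"
  have edge: "e = {Min e, Max e} \<and> Min e < Max e \<and> Max e < n" if eF: "e \<in> F" for e
  proof -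
    obtain u v where "u < n" "v < n" "u \<noteq> v" "e = {u, v}" using bspec[OF H2 eF] by blast
    then show ?thesis by (cases "u < v") (auto simp: insert_commute)
  qed
  have minin: "Min e \<in> e" "Max e \<in> e" if "e \<in> F" for e
    using edge[OF that] by (metis insertCI)+
  have euniq: "e = e'" if "e \<in> F" "e' \<in> F" "v \<in> e" "v \<in> e'" for e e' v
  proof -
    have "e \<inter> e' \<noteq> {}" using that(3,4) by blast
    then show ?thesis using H5 that(1,2) by meson
  qed
  define eo where "eo v = (THE e. e \<in> F \<and> v \<in> e)" for v
  have eo: "eo v = e" if "e \<in> F" "v \<in> e" for e v
    unfolding eo_def
  proof (rule the_equality)
    show "e \<in> F \<and> v \<in> e" using that by simp
    fix e' assume "e' \<in> F \<and> v \<in> e'"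
    then show "e' = e" using euniq[of e' e v] that by simp
  qed
  define M where "M = Max ` F"
  define P where "P = Min ` F"
  define Col where "Col = V - M"
  have injMax: "inj_on Max F"
  proof
    fix e e' assume "e \<in> F" "e' \<in> F" "Max e = Max e'"
    then show "e = e'" using edge euniq by (metis insertCI)
  qed
  have injMin: "inj_on Min F"
  proof
    fix e e' assume "e \<in> F" "e' \<in> F" "Min e = Min e'"
    then show "e = e'" using edge euniq by (metis insertCI)
  qed
  have MV: "M \<subseteq> V" unfolding M_def V_def using edge by auto
  have cardM: "card M = r" unfolding M_def using card_image[OF injMax] cF by simp
  have cardCol: "card Col = n - r" unfolding Col_def
    using card_Diff_subset[of M V] MV cardM by (simp add: V_def finite_subset)
  have fCol: "finite Col" unfolding Col_def V_def by simp
  have MinCol: "Min e \<in> Col" if "e \<in> F" for e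
  proof -
    have "Min e \<in> V" using edge[OF that] unfolding V_def by auto
    moreover have "Min e \<notin> M"
    proof
      assume "Min e \<in> M"
      then obtain e' where e': "e' \<in> F" "Min e = Max e'" unfolding M_def by auto
      then have "e = e'" using euniq edge that by (metis insertCI)
      then show False using edge[OF that] e' by simp
    qed
    ultimately show ?thesis unfolding Col_def by simp
  qed
  have PCol: "P \<subseteq> Col" unfolding P_def using MinCol by auto
  have cardP: "card P = r" unfolding P_def using card_image[OF injMin] cF by simp
  have unmCol: "v \<in> Col" if "v \<in> V" "v \<notin> \<Union>F" for v
  proof -
    have "v \<notin> M" using that edge unfolding M_def by (metis UnionI image_iff insertCI)
    then show ?thesis using that unfolding Col_def by simp
  qed
  have PU: "P \<subseteq> \<Union>F" unfolding P_def using minin by blast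
  have "\<forall>e\<in>F. \<exists>A B. A \<subseteq> Col - {Min e} \<and> B \<subseteq> Col - {Min e} \<and> A \<inter> B = {}
        \<and> card A = k - 1 \<and> card B = k - 1"
  proof
    fix e assume e: "e \<in> F"
    have "card (Col - {Min e}) = n - r - 1" using cardCol MinCol[OF e] fCol by simp
    then have "2 * (k - 1) \<le> card (Col - {Min e})" using nle kr by linarith
    then obtain D where D: "D \<subseteq> Col - {Min e}" "card D = 2 * (k - 1)"
      using obtain_subset_with_card_n by metis
    have fD: "finite D" using D fCol finite_subset by blast
    have "k - 1 \<le> card D" using D(2) by simp
    then obtain A where A: "A \<subseteq> D" "card A = k - 1"
      using obtain_subset_with_card_n by metis
    have "card (D - A) = k - 1" using A D fD by (simp add: card_Diff_subset finite_subset)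
    then show "\<exists>A B. A \<subseteq> Col - {Min e} \<and> B \<subseteq> Col - {Min e} \<and> A \<inter> B = {}
        \<and> card A = k - 1 \<and> card B = k - 1"
      using A D by (intro exI[of _ A] exI[of _ "D - A"]) auto
  qed
  then obtain A B where AB: "\<And>e. e \<in> F \<Longrightarrow> A e \<subseteq> Col - {Min e} \<and> B e \<subseteq> Col - {Min e}
     \<and> A e \<inter> B e = {} \<and> card (A e) = k - 1 \<and> card (B e) = k - 1"
    by metis
  obtain Q where Q: "Q \<subseteq> P" "card Q = k - 1"
  proof -
    have "k - 1 \<le> card P" using cardP kr by simp
    then show ?thesis using that obtain_subset_with_card_n by metis
  qed
  have fP: "finite P" unfolding P_def using fF by simp
  have fQ: "finite Q" using Q fP finite_subset by blast
  define L where "L v = (if v \<in> \<Union>F then (if v = Min (eo v) then insert (Min (eo v)) (A (eo v))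
      else insert (Min (eo v)) (B (eo v))) else insert v Q)" for v
  define d where "d v = (if v \<in> \<Union>F then Min (eo v) else v)" for v
  have LMin: "L (Min e) = insert (Min e) (A e)" if "e \<in> F" for e
  proof -
    have "Min e \<in> e" using edge[OF that] by (metis insertCI)
    then show ?thesis unfolding L_def using eo[OF that] that by auto
  qed
  have LMax: "L (Max e) = insert (Min e) (B e)" if "e \<in> F" for e
  proof -
    have "Max e \<in> e" using edge[OF that] by (metis insertCI)
    then show ?thesis unfolding L_def using eo[OF that] that edge[OF that] by auto
  qed
  have Lunm: "L v = insert v Q" if "v \<notin> \<Union>F" for v using that unfolding L_def by simp
  have matched: "\<exists>e\<in>F. v = Min e \<or> v = Max e" if "v \<in> \<Union>F" for v
    using that edge by (metis UnionE insertE singletonD)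
  have dmin: "d (Min e) = Min e" "d (Max e) = Min e" if "e \<in> F" for e
    unfolding d_def using eo[OF that] edge[OF that] that by (metis UnionI insertCI)+
  have kL: "k_list_assignment V k L"
    unfolding k_list_assignment_def
  proof
    fix v assume v: "v \<in> V"
    show "finite (L v) \<and> card (L v) = k"
    proof (cases "v \<in> \<Union>F")
      case True
      then obtain e where e: "e \<in> F" "v = Min e \<or> v = Max e" using matched by blast
      have fA: "finite (A e)" "finite (B e)" using AB[OF e(1)] fCol finite_subset by (meson Diff_subset)+
      show ?thesis using e LMin LMax AB[OF e(1)] fA k1 by (auto simp: card_insert_if)
    next
      case False
      have "v \<notin> Q" using Q PU False by auto
      then show ?thesis using Lunm[OF False] fQ Q k1 by simp
    qed
  qed
  have LCol: "L v \<subseteq> Col" if "v \<in> V" for v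
  proof (cases "v \<in> \<Union>F")
    case True
    then obtain e where e: "e \<in> F" "v = Min e \<or> v = Max e" using matched by blast
    then show ?thesis using LMin LMax AB[OF e(1)] MinCol[OF e(1)] by auto
  next
    case False
    then show ?thesis using Lunm unmCol that Q PCol by auto
  qed
  have dL: "d v \<in> L v" for v
  proof (cases "v \<in> \<Union>F")
    case True
    then obtain e where e: "e \<in> F" "v = Min e \<or> v = Max e" using matched by blast
    then show ?thesis using LMin LMax dmin by auto
  next
    case False
    then show ?thesis using Lunm d_def by auto
  qed
  have Eiff: "E u v \<longleftrightarrow> u \<noteq> v \<and> {u, v} \<notin> F" if "u \<in> V" "v \<in> V" for u v
    using that unfolding E_def Kn_minus_def V_def by auto
  have dcol: "is_L_coloring V E L (restrict d V)"
    unfolding is_L_coloring_def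
  proof (intro conjI ballI impI)
    show "restrict d V \<in> extensional V" by simp
    fix v assume "v \<in> V" then show "restrict d V v \<in> L v" using dL by simp
  next
    fix u v assume uv: "u \<in> V" "v \<in> V" "E u v"
    then have ne: "u \<noteq> v" "{u, v} \<notin> F" using Eiff by auto
    show "restrict d V u \<noteq> restrict d V v"
    proof
      assume "restrict d V u = restrict d V v"
      then have duv: "d u = d v" using uv by simp
      show False
      proof (cases "u \<in> \<Union>F")
        case uT: True
        then obtain e where e: "e \<in> F" "u = Min e \<or> u = Max e" using matched by blast
        show False
        proof (cases "v \<in> \<Union>F")
          case True
          then obtain e' where e': "e' \<in> F" "v = Min e' \<or> v = Max e'" using matched by blast
          have "Min e = Min e'" using duv e e' dmin by metis
          then have "e = e'" using injMin e e' unfolding inj_on_def by blast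
          then have "{u, v} = e" using e e' edge[OF e(1)] ne by auto
          then show False using ne e by simp
        next
          case False
          then have "v = Min e" using duv e dmin d_def by metis
          then show False using False PU e P_def by auto
        qed
      next
        case uF: False
        show False
        proof (cases "v \<in> \<Union>F")
          case True
          then obtain e' where e': "e' \<in> F" "v = Min e' \<or> v = Max e'" using matched by blast
          then have "u = Min e'" using duv uF dmin d_def by metis
          then show False using uF PU e' P_def by auto
        next
          case False
          then show False using uF duv ne d_def by simp
        qed
      qed
    qed
  qed
  have uniq: "c = restrict d V" if col: "is_L_coloring V E L c" for c
  proof -
    have cext: "c \<in> extensional V" and cL: "\<And>v. v \<in> V \<Longrightarrow> c v \<in> L v"
      and cp: "\<And>u v. u \<in> V \<Longrightarrow> v \<in> V \<Longrightarrow> E u v \<Longrightarrow> c u \<noteq> c v"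
      using col unfolding is_L_coloring_def by auto
    have mono: "c (Min e) = c (Max e)" if e: "e \<in> F" for e
    proof (rule ccontr)
      assume e0: "c (Min e) \<noteq> c (Max e)"
      define Mo where "Mo = {e\<in>F. c (Min e) = c (Max e)}"
      define S where "S = V - Max ` Mo"
      have MoF: "Mo \<subseteq> F - {e}" unfolding Mo_def using e0 by auto
      have "card Mo \<le> r - 1" using card_mono[OF _ MoF] fF cF e by (simp add: card_Diff_singleton)
      then have cMo: "card (Max ` Mo) \<le> r - 1" using card_image_le[of Mo Max] fF MoF
        by (meson finite_Diff finite_subset le_trans)
      have MoV: "Max ` Mo \<subseteq> V" using MV MoF unfolding M_def by auto
      have "card S = n - card (Max ` Mo)" unfolding S_def
        using card_Diff_subset[OF _ MoV] MoV by (simp add: V_def finite_subset)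
      then have cS: "card S \<ge> n - (r - 1)" using cMo by simp
      have injS: "inj_on c S"
      proof
        fix a b assume ab: "a \<in> S" "b \<in> S" "c a = c b"
        show "a = b"
        proof (rule ccontr)
          assume ne: "a \<noteq> b"
          have abV: "a \<in> V" "b \<in> V" using ab unfolding S_def by auto
          then have F': "{a, b} \<in> F" using cp Eiff ne ab(3) by blast
          have ed: "{a,b} = {Min {a,b}, Max {a,b}}" using edge[OF F'] by simp
          have "c (Min {a,b}) = c (Max {a,b})" using ab(3) ed
            by (metis doubleton_eq_iff)
          then have "{a,b} \<in> Mo" unfolding Mo_def using F' by simp
          then have "Max {a,b} \<in> Max ` Mo" by (rule imageI)
          moreover have "Max {a,b} \<in> {a,b}" by (metis ed insertCI)
          ultimately show False using ab unfolding S_def by auto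
        qed
      qed
      have "c ` S \<subseteq> Col" using cL LCol unfolding S_def by blast
      then have "card S \<le> card Col" using card_inj_on_le[OF injS] fCol by blast
      moreover have "r \<ge> 1" using cF e fF by (metis card_0_eq empty_iff less_one not_less)
      ultimately show False using cS cardCol nle by linarith
    qed
    have cmatch: "c (Min e) = Min e \<and> c (Max e) = Min e" if e: "e \<in> F" for e
    proof -
      have V2: "Min e \<in> V" "Max e \<in> V" using edge[OF e] unfolding V_def by auto
      have "L (Min e) \<inter> L (Max e) = {Min e}" using LMin[OF e] LMax[OF e] AB[OF e] by auto
      have m1: "c (Max e) \<in> L (Max e)" by (rule cL[OF V2(2)])
      have m2: "c (Max e) \<in> L (Min e)" using cL[OF V2(1)] mono[OF e] by simp
      have "c (Max e) \<in> {Min e}" using IntI[OF m2 m1] \<open>L (Min e) \<inter> L (Max e) = {Min e}\<close> by simp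
      then show ?thesis using mono[OF e] by simp
    qed
    show ?thesis
    proof
      fix v
      show "c v = restrict d V v"
      proof (cases "v \<in> V")
        case False then show ?thesis using cext by (simp add: extensional_def)
      next
        case vV: True
        show ?thesis
        proof (cases "v \<in> \<Union>F")
          case True
          then obtain e where e: "e \<in> F" "v = Min e \<or> v = Max e" using matched by blast
          have "c v = d v" using e(2)
          proof
            assume "v = Min e" then show ?thesis using cmatch[OF e(1)] dmin[OF e(1)] by simp
          next
            assume "v = Max e" then show ?thesis using cmatch[OF e(1)] dmin[OF e(1)] by simp
          qed
          then show ?thesis using vV by simp
        next
          case False
          have "c v \<in> insert v Q" using cL[OF vV] Lunm[OF False] by simp
          moreover have "c v \<notin> Q"
          proof
            assume "c v \<in> Q"
            then obtain e where e: "e \<in> F" "c v = Min e" using Q P_def by auto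
            have mV: "Min e \<in> V" using edge[OF e(1)] unfolding V_def by auto
            have "Min e \<in> \<Union>F" using PU e P_def by auto
            then have "v \<noteq> Min e" using False by auto
            moreover have "{v, Min e} \<notin> F" using False by auto
            ultimately have "E v (Min e)" using Eiff vV mV by simp
            then have "c v \<noteq> c (Min e)" using cp vV mV by simp
            then show False using cmatch e by simp
          qed
          ultimately show ?thesis using vV False d_def by simp
        qed
      qed
    qed
  qed
  have "\<exists>!c. is_L_coloring V E L c" using dcol uniq by blast
  then have "k_list_assignment V k L \<and> (\<exists>!c. is_L_coloring V E L c)" using kL by simp
  then show ?thesis unfolding uniquely_k_list_colorable_def V_def E_def by blast
qed

theorem proposition2p5:
  fixes r n :: nat and F :: "nat set set"
  assumes "n \<ge> 3 * r + 1"
    and "\<forall>e\<in>F. \<exists>u v. u < n \<and> v < n \<and> u \<noteq> v \<and> e = {u, v}"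
    and "card F = r" and "finite F"
    and "\<forall>e\<in>F. \<forall>e'\<in>F. e \<noteq> e' \<longrightarrow> e \<inter> e' = {}"
  shows "m_number {..<n} (Kn_minus n F) = r + 2"
  unfolding m_number_def
proof (rule Least_equality)
  have "2 * r < n" using assms(1) by linarith
  then show "1 \<le> r + 2 \<and> has_property_M {..<n} (Kn_minus n F) (r + 2)"
    using upper[OF _ assms(2,3,4)] by simp
next
  fix y assume y: "1 \<le> y \<and> has_property_M {..<n} (Kn_minus n F) y"
  show "r + 2 \<le> y"
  proof (rule ccontr)
    assume "\<not> r + 2 \<le> y"
    then have "y \<le> r + 1" by simp
    then have "uniquely_k_list_colorable {..<n} (Kn_minus n F) y"
      using lower[OF assms(1,2,3,4,5)] y by simp
    then show False using y unfolding has_property_M_def by simp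
  qed
qed

end
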